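(* Let $H$ be an atomic hypergraph and suppose the rank $r=|\bigcup H|-n$ of $\mathcal A(H)$ (with $n$ the connectedness number of $H$) satisfies $r>0$. Then every vertex of $\mathcal A(H)$ is contained in exactly $r$ facets of $\mathcal A(H)$ (i.e. is $\le$-comparable with exactly $r$ faces of rank $r-1$).
   Context: A hypergraph is a finite set $H$ of nonempty subsets of some finite set; its carrier is $\bigcup H$. For a family $F$ and set $Y$, $F_Y=\{X\in F\mid X\subseteq Y\}$. A hypergraph partition of $H$ is a partition $\{H_1,\dots,H_n\}$ ($n\ge0$) of the set $H$ with $\{\bigcup H_1,\dots,\bigcup H_n\}$ a partition of $\bigcup H$; $H$ is connected if it has exactly one hypergraph partition; the finest hypergraph partition is the unique one whose blocks are connected; its blocks are the connected components, the sets $\bigcup H_i$ are the connected components of the carrier, and their number $n$ is the connectedness number. $H$ is atomic if $\{x\}\in H$ for all $x\in\bigcup H$. Constructions of an atomic $H$, by induction on $|\bigcup H|$: (0) $\emptyset$ is the only construction of $\emptyset$; (1) if $|\bigcup H|\ge1$, $H$ connected, $x\in\bigcup H$, $K$ a construction of $H_{\bigcup H\setminus\{x\}}$, then $K\cup\{\bigcup H\}$ is a construction of $H$; (2) if $H$ is not connected with finest hypergraph partition $\{H_1,\dots,H_n\}$, $n\ge2$, and $K_i$ is a construction of $H_i$, then $K_1\cup\dots\cup K_n$ is a construction of $H$. A construct of $H$ is a subset of some construction of $H$ that contains every connected component of the carrier $\bigcup H$. $H$ is saturated if $X_1,X_2\in H$, $X_1\cap X_2\ne\emptyset$ imply $X_1\cup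 X_2\in H$; the saturated closure $\bar H$ is the saturated hypergraph obtained by adding to $H$ all sets equivalent under the following: $Y\subseteq \bigcup H$ is dispensable in $H$ if $H_Y\setminus\{Y\}$ is connected with carrier $Y$, and $\bar H$ is the largest hypergraph obtainable from $H$ by repeatedly adding dispensable sets. The poset $\mathcal A(H)$ has as elements all constructs of $H$ together with $\bar H^*=\bar H\cup\{*\}$ for a new element $*\notin\bigcup H$, ordered by $C_1\le C_2$ iff $C_2\subseteq C_1$. Its rank is $r=|\bigcup H|-n$; for $0\le k\le r$, the faces of rank $k$ are the constructs of cardinality $|\bigcup H|-k$, and $\bar H^*$ is the unique face of rank $-1$. Vertices are faces of rank $0$ (these are exactly the constructions), facets are faces of rank $r-1$. *)

theory Defs
  imports Main
begin

definition hypergraph :: "'a set set \<Rightarrow> bool" where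
  "hypergraph H \<longleftrightarrow> finite H \<and> (\<forall>X\<in>H. X \<noteq> {} \<and> finite X)"

definition restr :: "'a set set \<Rightarrow> 'a set \<Rightarrow> 'a set set" where
  "restr F Y = {X \<in> F. X \<subseteq> Y}"

definition hyp_partition :: "'a set set \<Rightarrow> 'a set set set \<Rightarrow> bool" where
  "hyp_partition H P \<longleftrightarrow>
     (\<forall>B\<in>P. B \<noteq> {}) \<and> \<Union>P = H \<and>
     (\<forall>B1\<in>P. \<forall>B2\<in>P. B1 \<noteq> B2 \<longrightarrow> B1 \<inter> B2 = {} \<and> \<Union>B1 \<inter> \<Union>B2 = {})"

definition connected_hg :: "'a set set \<Rightarrow> bool" where
  "connected_hg H \<longleftrightarrow> (\<exists>!P. hyp_partition H P)"

definition components :: "'a set set \<Rightarrow> 'a set set set" where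
  "components H = (THE P. hyp_partition H P \<and> (\<forall>B\<in>P. connected_hg B))"

definition conn_number :: "'a set set \<Rightarrow> nat" where
  "conn_number H = card (components H)"

definition atomic :: "'a set set \<Rightarrow> bool" where
  "atomic H \<longleftrightarrow> (\<forall>x\<in>\<Union>H. {x} \<in> H)"

inductive construction :: "'a set set \<Rightarrow> 'a set set \<Rightarrow> bool" where
  empty: "construction {} {}"
| conn: "\<lbrakk>\<Union>H \<noteq> {}; connected_hg H; x \<in> \<Union>H;
          construction (restr H (\<Union>H - {x})) K\<rbrakk>
         \<Longrightarrow> construction H (insert (\<Union>H) K)"
| disconn: "\<lbrakk>\<not> connected_hg H; card (components H) \<ge> 2;
             \<forall>B\<in>components H. construction B (Ks B)\<rbrakk>
         \<Longrightarrow> construction H (\<Union>B\<in>components H. Ks B)"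

definition construct :: "'a set set \<Rightarrow> 'a set set \<Rightarrow> bool" where
  "construct H C \<longleftrightarrow> (\<exists>K. construction H K \<and> C \<subseteq> K) \<and>
                      (\<forall>B\<in>components H. \<Union>B \<in> C)"

definition face_of_rank :: "'a set set \<Rightarrow> nat \<Rightarrow> 'a set set \<Rightarrow> bool" where
  "face_of_rank H k C \<longleftrightarrow> construct H C \<and> card C = card (\<Union>H) - k"

end

theory Submission
  imports Defs
begin

lemma hpD1: "hyp_partition H P \<Longrightarrow> B \<in> P \<Longrightarrow> B \<noteq> {}"
  unfolding hyp_partition_def by simp
lemma hpD2: "hyp_partition H P \<Longrightarrow> \<Union>P = H"
  unfolding hyp_partition_def by simp
lemma hpD3: "hyp_partition H P \<Longrightarrow> B1 \<in> P \<Longrightarrow> B2 \<in> P \<Longrightarrow> B1 \<noteq> B2 \<Longrightarrow> B1 \<inter> B2 = {}"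
  unfolding hyp_partition_def by simp
lemma hpD4: "hyp_partition H P \<Longrightarrow> B1 \<in> P \<Longrightarrow> B2 \<in> P \<Longrightarrow> B1 \<noteq> B2 \<Longrightarrow> \<Union>B1 \<inter> \<Union>B2 = {}"
  unfolding hyp_partition_def by simp
lemma hpI: "(\<And>B. B \<in> P \<Longrightarrow> B \<noteq> {}) \<Longrightarrow> \<Union>P = H \<Longrightarrow>
  (\<And>B1 B2. B1 \<in> P \<Longrightarrow> B2 \<in> P \<Longrightarrow> B1 \<noteq> B2 \<Longrightarrow> B1 \<inter> B2 = {} \<and> \<Union>B1 \<inter> \<Union>B2 = {})
  \<Longrightarrow> hyp_partition H P"
  unfolding hyp_partition_def by blast
lemma hpS: "hyp_partition H P \<Longrightarrow> B \<in> P \<Longrightarrow> B \<subseteq> H"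
  using hpD2 by blast

lemma hp_single: "H \<noteq> {} \<Longrightarrow> hyp_partition H {H}"
  by (simp add: hyp_partition_def)

lemma conn_uniq: "connected_hg B \<Longrightarrow> hyp_partition B P1 \<Longrightarrow> hyp_partition B P2 \<Longrightarrow> P1 = P2"
  unfolding connected_hg_def by blast

lemma hp_refine:
  assumes P: "hyp_partition H P" and Q: "hyp_partition H Q" and B: "B \<in> P"
  shows "hyp_partition B {B \<inter> C | C. C \<in> Q \<and> B \<inter> C \<noteq> {}}"
proof (rule hpI)
  have BH: "B \<subseteq> H" using hpS[OF P B] .
  have UQ: "\<Union>Q = H" using hpD2[OF Q] .
  fix X assume "X \<in> {B \<inter> C | C. C \<in> Q \<and> B \<inter> C \<noteq> {}}"
  then show "X \<noteq> {}" by auto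
next
  have BH: "B \<subseteq> H" using hpS[OF P B] .
  have UQ: "\<Union>Q = H" using hpD2[OF Q] .
  show "\<Union>{B \<inter> C | C. C \<in> Q \<and> B \<inter> C \<noteq> {}} = B"
  proof
    show "\<Union>{B \<inter> C | C. C \<in> Q \<and> B \<inter> C \<noteq> {}} \<subseteq> B" by auto
    show "B \<subseteq> \<Union>{B \<inter> C | C. C \<in> Q \<and> B \<inter> C \<noteq> {}}"
    proof
      fix h assume h: "h \<in> B"
      then have "h \<in> \<Union>Q" using BH UQ by auto
      then obtain C where C: "C \<in> Q" "h \<in> C" by auto
      then have "B \<inter> C \<in> {B \<inter> C | C. C \<in> Q \<and> B \<inter> C \<noteq> {}}" using h by auto
      moreover have "h \<in> B \<inter> C" using h C by auto
      ultimately show "h \<in> \<Union>{B \<inter> C | C. C \<in> Q \<and> B \<inter> C \<noteq> {}}" by (rule UnionI)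
    qed
  qed
next
  fix X1 X2 assume X1: "X1 \<in> {B \<inter> C | C. C \<in> Q \<and> B \<inter> C \<noteq> {}}"
    and X2: "X2 \<in> {B \<inter> C | C. C \<in> Q \<and> B \<inter> C \<noteq> {}}" and ne: "X1 \<noteq> X2"
  from X1 obtain C1 where c1: "C1 \<in> Q" "X1 = B \<inter> C1" by auto
  from X2 obtain C2 where c2: "C2 \<in> Q" "X2 = B \<inter> C2" by auto
  have "C1 \<noteq> C2" using ne c1 c2 by auto
  then have d: "C1 \<inter> C2 = {}" "\<Union>C1 \<inter> \<Union>C2 = {}"
    using hpD3[OF Q c1(1) c2(1)] hpD4[OF Q c1(1) c2(1)] by auto
  have "X1 \<inter> X2 = {}" using c1(2) c2(2) d(1) by auto
  moreover have "\<Union>X1 \<inter> \<Union>X2 = {}" using c1(2) c2(2) d(2) by auto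
  ultimately show "X1 \<inter> X2 = {} \<and> \<Union>X1 \<inter> \<Union>X2 = {}" by simp
qed

lemma hp_sub:
  assumes P: "hyp_partition H P" and Q: "hyp_partition H Q"
    and cP: "\<forall>B\<in>P. connected_hg B" and B: "B \<in> P"
  shows "\<exists>C\<in>Q. B \<subseteq> C"
proof -
  have Bne: "B \<noteq> {}" using hpD1[OF P B] .
  have conn: "connected_hg B" using cP B by blast
  have R: "hyp_partition B {B \<inter> C | C. C \<in> Q \<and> B \<inter> C \<noteq> {}}" using hp_refine[OF P Q B] .
  have "hyp_partition B {B}" using hp_single[OF Bne] .
  then have eq: "{B \<inter> C | C. C \<in> Q \<and> B \<inter> C \<noteq> {}} = {B}"
    using conn_uniq[OF conn R] by simp
  obtain h where "h \<in> B" using Bne by blast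
  moreover have "B \<subseteq> H" using hpS[OF P B] .
  ultimately obtain C where C: "C \<in> Q" "h \<in> C" using hpD2[OF Q] by blast
  hence "B \<inter> C \<in> {B \<inter> C | C. C \<in> Q \<and> B \<inter> C \<noteq> {}}" using \<open>h \<in> B\<close> by blast
  hence "B \<inter> C = B" using eq by blast
  thus ?thesis using C by blast
qed

lemma hp_sub2:
  assumes P: "hyp_partition H P" and Q: "hyp_partition H Q"
    and cP: "\<forall>B\<in>P. connected_hg B" and cQ: "\<forall>C\<in>Q. connected_hg C"
  shows "P \<subseteq> Q"
proof
  fix B assume B: "B \<in> P"
  obtain C where C: "C \<in> Q" "B \<subseteq> C" using hp_sub[OF P Q cP B] by blast
  obtain B' where B': "B' \<in> P" "C \<subseteq> B'" using hp_sub[OF Q P cQ C(1)] by blast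
  have Bne: "B \<noteq> {}" using hpD1[OF P B] .
  have "B = B'"
  proof (rule ccontr)
    assume "B \<noteq> B'"
    hence "B \<inter> B' = {}" using hpD3[OF P B B'(1)] by blast
    thus False using Bne C(2) B'(2) by blast
  qed
  hence "B = C" using C(2) B'(2) by blast
  thus "B \<in> Q" using C by simp
qed

lemma hp_exists:
  assumes "finite H"
  shows "\<exists>P. hyp_partition H P \<and> (\<forall>B\<in>P. connected_hg B)"
  using assms
proof (induction H rule: finite_psubset_induct)
  case (psubset H)
  show ?case
  proof (cases "H = {}")
    case True
    then show ?thesis by (intro exI[of _ "{}"]) (simp add: hyp_partition_def)
  next
    case Hne: False
    show ?thesis
    proof (cases "connected_hg H")
      case True
      then show ?thesis using hp_single[OF Hne] by blast
    next
      case False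
      have "\<exists>P. hyp_partition H P \<and> P \<noteq> {H}"
      proof (rule ccontr)
        assume "\<not> (\<exists>P. hyp_partition H P \<and> P \<noteq> {H})"
        hence all: "\<And>P. hyp_partition H P \<Longrightarrow> P = {H}" by blast
        have "\<exists>!P. hyp_partition H P"
          by (rule ex1I[of _ "{H}"]) (rule hp_single[OF Hne], rule all)
        thus False using False unfolding connected_hg_def by simp
      qed
      then obtain P where P: "hyp_partition H P" "P \<noteq> {H}" by (elim exE conjE)
      have sub: "B \<subset> H" if B: "B \<in> P" for B
      proof -
        have BH: "B \<subseteq> H" using hpS[OF P(1) B] .
        have "B \<noteq> H"
        proof
          assume "B = H"
          hence HP: "H \<in> P" using B by simp
          have "P \<subseteq> {H}"
          proof
            fix B2 assume B2: "B2 \<in> P"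
            show "B2 \<in> {H}"
            proof (rule ccontr)
              assume "B2 \<notin> {H}"
              hence "B2 \<inter> H = {}" "B2 \<noteq> {}" "B2 \<subseteq> H"
                using hpD3[OF P(1) B2 HP] hpD1[OF P(1) B2] hpS[OF P(1) B2] by blast+
              thus False by blast
            qed
          qed
          moreover have "P \<noteq> {}" using hpD2[OF P(1)] Hne by blast
          ultimately show False using P(2) by blast
        qed
        thus ?thesis using BH by blast
      qed
      have "\<forall>B\<in>P. \<exists>Q. hyp_partition B Q \<and> (\<forall>C\<in>Q. connected_hg C)"
      proof
        fix B assume "B \<in> P"
        then show "\<exists>Q. hyp_partition B Q \<and> (\<forall>C\<in>Q. connected_hg C)"
          by (rule psubset.IH[OF sub])
      qed
      then have "\<exists>f. \<forall>B\<in>P. hyp_partition B (f B) \<and> (\<forall>C\<in>f B. connected_hg C)"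
        by (rule bchoice)
      then obtain f where f: "\<forall>B\<in>P. hyp_partition B (f B) \<and> (\<forall>C\<in>f B. connected_hg C)"
        by (elim exE)
      have "hyp_partition H (\<Union>(f ` P))"
      proof (rule hpI)
        fix C assume "C \<in> \<Union>(f ` P)"
        then obtain B where "B \<in> P" "C \<in> f B" by blast
        then show "C \<noteq> {}" using f hpD1 by blast
      next
        have hf: "\<And>B. B \<in> P \<Longrightarrow> \<Union>(f B) = B" using f hpD2 by blast
        have "\<Union>(\<Union>(f ` P)) = (\<Union>B\<in>P. \<Union>(f B))" by blast
        also have "\<dots> = \<Union>P" using hf by simp
        finally show "\<Union>(\<Union>(f ` P)) = H" using hpD2[OF P(1)] by simp
      next
        fix C1 C2 assume C1: "C1 \<in> \<Union>(f ` P)" and C2: "C2 \<in> \<Union>(f ` P)" and ne: "C1 \<noteq> C2"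
        then obtain B1 B2 where b: "B1 \<in> P" "B2 \<in> P" "C1 \<in> f B1" "C2 \<in> f B2" by blast
        have "C1 \<inter> C2 = {} \<and> \<Union>C1 \<inter> \<Union>C2 = {}"
        proof (cases "B1 = B2")
          case True
          have hB: "hyp_partition B1 (f B1)" using f b(1) by blast
          have "C2 \<in> f B1" using True b(4) by simp
          then show ?thesis using hpD3[OF hB b(3) _ ne] hpD4[OF hB b(3) _ ne] by simp
        next
          case False
          have d: "B1 \<inter> B2 = {}" "\<Union>B1 \<inter> \<Union>B2 = {}"
            using hpD3[OF P(1) b(1) b(2) False] hpD4[OF P(1) b(1) b(2) False] by simp_all
          have h1: "hyp_partition B1 (f B1)" using f b(1) by blast
          have h2: "hyp_partition B2 (f B2)" using f b(2) by blast
          have "C1 \<subseteq> B1" "C2 \<subseteq> B2" using hpS[OF h1 b(3)] hpS[OF h2 b(4)] by simp_all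
          then show ?thesis using d by blast
        qed
        thus "C1 \<inter> C2 = {} \<and> \<Union>C1 \<inter> \<Union>C2 = {}" by blast
      qed
      moreover have "\<forall>C\<in>\<Union>(f ` P). connected_hg C" using f by blast
      ultimately show ?thesis by blast
    qed
  qed
qed

lemma components_prop:
  assumes "finite H"
  shows "hyp_partition H (components H) \<and> (\<forall>B\<in>components H. connected_hg B)"
  unfolding components_def
proof (rule theI')
  show "\<exists>!P. hyp_partition H P \<and> (\<forall>B\<in>P. connected_hg B)"
    using hp_exists[OF assms] hp_sub2 by (metis subset_antisym)
qed

theorem proposition5p2:
  fixes H :: "'a set set" and r :: nat
  assumes "hypergraph H" and "atomic H"
    and "r = card (\<Union>H) - conn_number H"
    and "0 < r"
  shows "\<forall>V. face_of_rank H 0 V \<longrightarrow>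
           card {F. face_of_rank H (r - 1) F \<and> F \<subseteq> V} = r"
proof (intro allI impI)
  fix V assume V: "face_of_rank H 0 V"
  define N where "N = card (\<Union>H)"
  define n where "n = conn_number H"
  define C0 where "C0 = Union ` components H"
  have fin: "finite H" and ne: "\<forall>X\<in>H. X \<noteq> {}" using assms(1) unfolding hypergraph_def by auto
  have cp: "hyp_partition H (components H)" using components_prop[OF fin] by blast
  have inj: "inj_on Union (components H)"
  proof (rule inj_onI)
    fix B1 B2 assume b: "B1 \<in> components H" "B2 \<in> components H" "\<Union>B1 = \<Union>B2"
    show "B1 = B2"
    proof (rule ccontr)
      assume "B1 \<noteq> B2"
      hence "\<Union>B1 \<inter> \<Union>B2 = {}" using hpD4[OF cp] b by blast
      moreover have "B1 \<noteq> {}" "B1 \<subseteq> H" using hpD1[OF cp] hpS[OF cp] b by blast+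
      ultimately obtain X where "X \<in> B1" "X \<in> H" by blast
      hence "X \<noteq> {}" "X \<subseteq> \<Union>B1" using ne by auto
      thus False using b(3) \<open>\<Union>B1 \<inter> \<Union>B2 = {}\<close> by blast
    qed
  qed
  have cC0: "card C0 = n" unfolding C0_def n_def conn_number_def using card_image[OF inj] .
  have cV: "card V = N" and conV: "construct H V" using V unfolding face_of_rank_def N_def by auto
  have rN: "r = N - n" using assms(3) unfolding N_def n_def .
  hence "N > 0" using assms(4) by simp
  hence finV: "finite V" using cV card_ge_0_finite by blast
  have C0V: "C0 \<subseteq> V" using conV unfolding construct_def C0_def by blast
  obtain K where K: "construction H K" "V \<subseteq> K" using conV unfolding construct_def by blast
  have finC0: "finite C0" using finV C0V finite_subset by blast
  have cVC: "card (V - C0) = r" using card_Diff_subset[OF finC0 C0V] cV cC0 rN by simp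
  have eq: "{F. face_of_rank H (r - 1) F \<and> F \<subseteq> V} = (\<lambda>X. insert X C0) ` (V - C0)"
  proof (intro set_eqI iffI)
    fix F assume "F \<in> {F. face_of_rank H (r - 1) F \<and> F \<subseteq> V}"
    hence F: "construct H F" "card F = N - (r - 1)" "F \<subseteq> V"
      unfolding face_of_rank_def N_def by auto
    have C0F: "C0 \<subseteq> F" using F(1) unfolding construct_def C0_def by blast
    have finF: "finite F" using finV F(3) finite_subset by blast
    have "card (F - C0) = 1" using card_Diff_subset[OF finC0 C0F] F(2) cC0 rN assms(4) by simp
    then obtain X where X: "F - C0 = {X}" using card_1_singletonE by blast
    hence "F = insert X C0" "X \<in> V - C0" using C0F F(3) by blast+
    thus "F \<in> (\<lambda>X. insert X C0) ` (V - C0)" by blast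
  next
    fix F assume "F \<in> (\<lambda>X. insert X C0) ` (V - C0)"
    then obtain X where X: "X \<in> V - C0" "F = insert X C0" by blast
    have FV: "F \<subseteq> V" using X C0V by blast
    have "construct H F" unfolding construct_def
      using K FV X(2) by (auto simp: C0_def)
    moreover have "card F = N - (r - 1)" using X finC0 cC0 rN assms(4) by simp
    ultimately show "F \<in> {F. face_of_rank H (r - 1) F \<and> F \<subseteq> V}"
      using FV unfolding face_of_rank_def N_def by simp
  qed
  have "inj_on (\<lambda>X. insert X C0) (V - C0)"
    by (rule inj_onI) blast
  hence "card ((\<lambda>X. insert X C0) ` (V - C0)) = card (V - C0)" by (rule card_image)
  thus "card {F. face_of_rank H (r - 1) F \<and> F \<subseteq> V} = r"
    using eq cVC by simp
qed

end
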